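(* Let $m\ge1$ be an integer, $\Gamma_1,\Gamma_2$ co-prime integers with $1<\Gamma_1<\Gamma_2$, $m_1=m\Gamma_1$, $m_2=m\Gamma_2$, let $1\le j\le K+1$ and put $X=\min\big(m_2(1+\ddot n_{2,j}),\,m_1(1+\ddot n_{1,j})\big)$. (a) For every integer $N$ with $0\le N<X$ and every pair of erroneous remainders $\tilde r_1,\tilde r_2$ of $N$ whose errors satisfy $$-\frac{\sigma_j}{2}\le\frac{\Delta r_1-\Delta r_2}{m}<\frac{\sigma_j}{2},$$ Algorithm 2 (with index $j$) returns $\hat n_1=n_1$ and $\hat n_2=n_2$. (b) (Sharpness) For $N=X$ there exist erroneous remainders $\tilde r_1,\tilde r_2$ of $N$ whose errors satisfy the same condition, for which Algorithm 2 returns $(\hat n_1,\hat n_2)\ne(n_1,n_2)$.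
   Context: $|a|_b$ is the remainder of the integer $a$ modulo the positive integer $b$; $[x]=\lfloor x+1/2\rfloor$. For an integer $N\ge0$: folding integers $n_i=\lfloor N/m_i\rfloor$, remainders $r_i=N-n_im_i$; erroneous remainders are integers $\tilde r_i$ with $0\le\tilde r_i<m_i$, errors $\Delta r_i=\tilde r_i-r_i$. Euclidean sequence: $\sigma_{-1}=\Gamma_2$, $\sigma_0=\Gamma_1$, $\sigma_i=|\sigma_{i-2}|_{\sigma_{i-1}}$ for $i\ge1$; $K\ge0$ is the index with $\sigma_K>1$, $\sigma_{K+1}=1$. For $1\le n<\Gamma_1$, $S_{2,n}=\{|t\Gamma_2|_{\Gamma_1}:0\le t\le n\}$, $d_{2,n}$ = minimum distance between distinct elements of $S_{2,n}$; for $1\le n<\Gamma_2$, $S_{1,n}=\{|t\Gamma_1|_{\Gamma_2}:0\le t\le n\}$, $d_{1,n}$ likewise. $\ddot n_{2,j}=\max\{n:1\le n<\Gamma_1,\ d_{2,n}\ge\sigma_j\}$, $\ddot n_{1,j}=\max\{n:1\le n<\Gamma_2,\ d_{1,n}\ge\sigma_j\}$. $\bar\Gamma_{21}$ is the inverse of $\Gamma_2$ modulo $\Gamma_1$, $\bar\Gamma_{12}$ the inverse of $\Gamma_1$ modulo $\Gamma_2$. Algorithm 2 (index $j$, input $\tilde r_1,\tilde r_2$): compute $\mathbf q_{21}=(\tilde r_1-\tilde r_2)/m$. (i) If $\mathbf q_{21}\ge\sigma_j/2$: if some $x\in S_{2,\ddot n_{2,j}}$ satisfies $-\sigma_j/2\le\mathbf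 q_{21}-x<\sigma_j/2$, let $s_2=x$; otherwise let $s_2$ be an element of $S_{2,\ddot n_{2,j}}$ at minimum distance from $\mathbf q_{21}$. Let $\hat n_2\in[0,\Gamma_1)$ with $\hat n_2\equiv s_2\bar\Gamma_{21}\pmod{\Gamma_1}$ and $\hat n_1=[(\hat n_2m_2+\tilde r_2-\tilde r_1)/m_1]$. (ii) If $\mathbf q_{21}<-\sigma_j/2$: if some $y\in S_{1,\ddot n_{1,j}}$ satisfies $-\sigma_j/2\le\mathbf q_{21}+y<\sigma_j/2$, let $s_1=y$; otherwise let $s_1$ be an element of $S_{1,\ddot n_{1,j}}$ at minimum distance from $-\mathbf q_{21}$. Let $\hat n_1\in[0,\Gamma_2)$ with $\hat n_1\equiv s_1\bar\Gamma_{12}\pmod{\Gamma_2}$ and $\hat n_2=[(\hat n_1m_1+\tilde r_1-\tilde r_2)/m_2]$. (iii) If $-\sigma_j/2\le\mathbf q_{21}<\sigma_j/2$: $\hat n_1=\hat n_2=0$. *)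

theory Defs
  imports "HOL-Number_Theory.Number_Theory"
begin

text \<open>Euclidean sequence, shifted by one: euc G1 G2 0 = sigma_(-1) = G2,
  euc G1 G2 1 = sigma_0 = G1, and sigma_i = sigma_(i-2) mod sigma_(i-1).\<close>
fun euc :: "int \<Rightarrow> int \<Rightarrow> nat \<Rightarrow> int" where
  "euc G1 G2 0 = G2"
| "euc G1 G2 (Suc 0) = G1"
| "euc G1 G2 (Suc (Suc n)) = euc G1 G2 n mod euc G1 G2 (Suc n)"

definition sigma :: "int \<Rightarrow> int \<Rightarrow> nat \<Rightarrow> int" where
  "sigma G1 G2 i = euc G1 G2 (Suc i)"

definition bracket :: "real \<Rightarrow> int" where
  "bracket x = \<lfloor>x + 1/2\<rfloor>"

definition S2 :: "int \<Rightarrow> int \<Rightarrow> int \<Rightarrow> int set" where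
  "S2 G1 G2 n = {(t * G2) mod G1 | t. 0 \<le> t \<and> t \<le> n}"

definition S1 :: "int \<Rightarrow> int \<Rightarrow> int \<Rightarrow> int set" where
  "S1 G1 G2 n = {(t * G1) mod G2 | t. 0 \<le> t \<and> t \<le> n}"

definition mindist :: "int set \<Rightarrow> int" where
  "mindist S = Min {\<bar>x - y\<bar> | x y. x \<in> S \<and> y \<in> S \<and> x \<noteq> y}"

definition nn2 :: "int \<Rightarrow> int \<Rightarrow> nat \<Rightarrow> int" where
  "nn2 G1 G2 j = Max {n. 1 \<le> n \<and> n < G1 \<and> mindist (S2 G1 G2 n) \<ge> sigma G1 G2 j}"

definition nn1 :: "int \<Rightarrow> int \<Rightarrow> nat \<Rightarrow> int" where
  "nn1 G1 G2 j = Max {n. 1 \<le> n \<and> n < G2 \<and> mindist (S1 G1 G2 n) \<ge> sigma G1 G2 j}"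

definition inv_mod :: "int \<Rightarrow> int \<Rightarrow> int" where
  "inv_mod a b = (SOME g. 0 \<le> g \<and> g < b \<and> [a * g = 1] (mod b))"

text \<open>Algorithm 2 as a relation: alg2 m G1 G2 j r1t r2t (n1hat, n2hat) holds iff
  (n1hat, n2hat) is a possible output of Algorithm 2 (index j) on input r1t, r2t
  (the algorithm may choose among several nearest elements).\<close>
definition alg2 :: "int \<Rightarrow> int \<Rightarrow> int \<Rightarrow> nat \<Rightarrow> int \<Rightarrow> int \<Rightarrow> int \<times> int \<Rightarrow> bool" where
  "alg2 m G1 G2 j r1t r2t out \<longleftrightarrow>
    (let q = real_of_int (r1t - r2t) / real_of_int m;
         s = real_of_int (sigma G1 G2 j);
         m1 = m * G1; m2 = m * G2;
         A = S2 G1 G2 (nn2 G1 G2 j);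
         B = S1 G1 G2 (nn1 G1 G2 j)
     in (q \<ge> s / 2 \<and>
          (\<exists>s2. s2 \<in> A \<and>
             (if (\<exists>x\<in>A. - s / 2 \<le> q - x \<and> q - x < s / 2)
              then - s / 2 \<le> q - s2 \<and> q - s2 < s / 2
              else (\<forall>y\<in>A. \<bar>q - s2\<bar> \<le> \<bar>q - y\<bar>)) \<and>
             snd out = (s2 * inv_mod G2 G1) mod G1 \<and>
             fst out = bracket (real_of_int (snd out * m2 + r2t - r1t) / real_of_int m1)))
      \<or> (q < - s / 2 \<and>
          (\<exists>s1. s1 \<in> B \<and>
             (if (\<exists>y\<in>B. - s / 2 \<le> q + y \<and> q + y < s / 2)
              then - s / 2 \<le> q + s1 \<and> q + s1 < s / 2
              else (\<forall>y\<in>B. \<bar>- q - s1\<bar> \<le> \<bar>- q - y\<bar>)) \<and>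
             fst out = (s1 * inv_mod G1 G2) mod G2 \<and>
             snd out = bracket (real_of_int (fst out * m1 + r1t - r2t) / real_of_int m2)))
      \<or> (- s / 2 \<le> q \<and> q < s / 2 \<and> out = (0, 0)))"

definition admissible :: "int \<Rightarrow> int \<Rightarrow> int \<Rightarrow> nat \<Rightarrow> int \<Rightarrow> int \<Rightarrow> int \<Rightarrow> bool" where
  "admissible m G1 G2 j N r1t r2t \<longleftrightarrow>
    0 \<le> r1t \<and> r1t < m * G1 \<and> 0 \<le> r2t \<and> r2t < m * G2 \<and>
    (let d1 = r1t - N mod (m * G1); d2 = r2t - N mod (m * G2);
         e = real_of_int (d1 - d2) / real_of_int m;
         s = real_of_int (sigma G1 G2 j)
     in - s / 2 \<le> e \<and> e < s / 2)"

definition bigX :: "int \<Rightarrow> int \<Rightarrow> int \<Rightarrow> nat \<Rightarrow> int" where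
  "bigX m G1 G2 j = min (m * G2 * (1 + nn2 G1 G2 j)) (m * G1 * (1 + nn1 G1 G2 j))"

end

theory Submission
  imports Defs
begin


lemma euc_nonneg: "0 < G1 \<Longrightarrow> 0 < G2 \<Longrightarrow> 0 \<le> euc G1 G2 n"
  by (induction G1 G2 n rule: euc.induct) (auto simp: mod_int_pos_iff)

lemma euc_zero: "euc G1 G2 n = 0 \<Longrightarrow> euc G1 G2 (n + 2*p) = 0"
proof (induction p)
  case 0 then show ?case by simp
next
  case (Suc p)
  have "n + 2 * Suc p = Suc (Suc (n + 2*p))" by simp
  then show ?case using Suc by simp
qed

lemma euc_pos:
  assumes "sigma G1 G2 K > 1" "sigma G1 G2 (K + 1) = 1" "0 < G1" "0 < G2" "n \<le> K + 2"
  shows "0 < euc G1 G2 n"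
proof (rule ccontr)
  assume "\<not> 0 < euc G1 G2 n"
  then have z: "euc G1 G2 n = 0" using euc_nonneg assms by (metis order_less_le)
  have "n = K + 2 \<or> n \<le> K+1" using assms by auto
  moreover have "euc G1 G2 (K+2) = 1" using assms(2) by (simp add: sigma_def)
  moreover have "euc G1 G2 (K+1) > 1" using assms(1) by (simp add: sigma_def)
  ultimately have "n \<le> K + 1" using z by auto
  then obtain p where "n + 2*p = K+1 \<or> n + 2*p = K+2"
  proof (cases "even (K + 1 - n)")
    case True
    then have "n + 2 * ((K+1-n) div 2) = K+1" using \<open>n \<le> K+1\<close> by simp
    then show ?thesis using that by blast
  next
    case False
    then have "n + 2 * ((K+2-n) div 2) = K+2" using \<open>n \<le> K+1\<close> by presburger
    then show ?thesis using that by blast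
  qed
  then show False using euc_zero[OF z, of p] assms
    by (auto simp: sigma_def)
qed

lemma euc_dec:
  assumes "0 < euc G1 G2 (Suc n)" "0 < G1" "0 < G2"
  shows "euc G1 G2 (Suc (Suc n)) < euc G1 G2 (Suc n)"
  using assms by simp

lemma euc_le2:
  assumes "sigma G1 G2 K > 1" "sigma G1 G2 (K + 1) = 1" "0 < G1" "0 < G2"
  shows "2 \<le> e \<Longrightarrow> e \<le> K + 2 \<Longrightarrow> euc G1 G2 e \<le> euc G1 G2 2"
proof (induction e rule: nat_induct_at_least)
  case base then show ?case by simp
next
  case (Suc e)
  have "0 < euc G1 G2 e" using euc_pos[OF assms] Suc by simp
  then have "euc G1 G2 (Suc e) < euc G1 G2 e"
    using euc_dec[OF _ assms(3,4), of "e - 1"] Suc by (cases e) auto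
  then show ?case using Suc by simp
qed



lemma mindist_le:
  assumes "finite S" "x \<in> S" "y \<in> S" "x \<noteq> y"
  shows "mindist S \<le> \<bar>x - y\<bar>"
proof -
  have "{\<bar>x - y\<bar> | x y. x \<in> S \<and> y \<in> S \<and> x \<noteq> y} \<subseteq> (\<lambda>(x,y). \<bar>x - y\<bar>) ` (S \<times> S)"
    by auto
  then have "finite {\<bar>x - y\<bar> | x y. x \<in> S \<and> y \<in> S \<and> x \<noteq> y}"
    using assms(1) finite_subset by blast
  then show ?thesis unfolding mindist_def using assms by (intro Min_le) auto
qed

lemma S2_finite: "0 < G1 \<Longrightarrow> finite (S2 G1 G2 n)"
proof -
  assume "0 < G1"
  then have "S2 G1 G2 n \<subseteq> {0..<G1}" unfolding S2_def by auto
  then show ?thesis using finite_subset by blast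
qed

lemma S1_finite: "0 < G2 \<Longrightarrow> finite (S1 G1 G2 n)"
proof -
  assume "0 < G2"
  then have "S1 G1 G2 n \<subseteq> {0..<G2}" unfolding S1_def by auto
  then show ?thesis using finite_subset by blast
qed

lemma S2_mem: "0 \<le> t \<Longrightarrow> t \<le> n \<Longrightarrow> (t * G2) mod G1 \<in> S2 G1 G2 n"
  unfolding S2_def by auto
lemma S1_mem: "0 \<le> t \<Longrightarrow> t \<le> n \<Longrightarrow> (t * G1) mod G2 \<in> S1 G1 G2 n"
  unfolding S1_def by auto

lemma mindist_two: "0 < d \<Longrightarrow> mindist {0, d} = (d::int)"
proof -
  assume "0 < d"
  have "{\<bar>x - y\<bar> | x y. x \<in> {0,d} \<and> y \<in> {0,d} \<and> x \<noteq> y} = {d}"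
  proof (rule equalityI)
    show "{d} \<subseteq> {\<bar>x - y\<bar> | x y. x \<in> {0,d} \<and> y \<in> {0,d} \<and> x \<noteq> y}"
    proof
      fix z assume "z \<in> {d}"
      then have "z = \<bar>d - 0\<bar> \<and> d \<in> {0,d} \<and> (0::int) \<in> {0,d} \<and> d \<noteq> 0" using \<open>0 < d\<close> by auto
      then show "z \<in> {\<bar>x - y\<bar> | x y. x \<in> {0,d} \<and> y \<in> {0,d} \<and> x \<noteq> y}" by blast
    qed
  qed (use \<open>0 < d\<close> in auto)
  then show ?thesis unfolding mindist_def by simp
qed

lemma inv_mod_prop:
  assumes "coprime a b" "1 < b"
  shows "0 \<le> inv_mod a b \<and> inv_mod a b < b \<and> [a * inv_mod a b = 1] (mod b)"
proof -
  obtain x where x: "[a * x = 1] (mod b)" using cong_solve_coprime_int[OF assms(1)] by blast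
  have "[a * (x mod b) = 1] (mod b)" using x
    by (metis cong_def mod_mult_right_eq)
  then have "\<exists>g. 0 \<le> g \<and> g < b \<and> [a * g = 1] (mod b)" using assms(2)
    by (intro exI[of _ "x mod b"]) auto
  then show ?thesis unfolding inv_mod_def by (rule someI_ex)
qed

lemma inv_mod_apply:
  assumes "coprime a b" "1 < b" "0 \<le> t" "t < b"
  shows "(((t * a) mod b) * inv_mod a b) mod b = t"
proof -
  have c: "[a * inv_mod a b = 1] (mod b)" using inv_mod_prop[OF assms(1,2)] by blast
  have "(((t * a) mod b) * inv_mod a b) mod b = (t * (a * inv_mod a b)) mod b"
    by (metis mod_mult_left_eq mult.assoc)
  also have "\<dots> = (t * 1) mod b" using c unfolding cong_def by (metis mod_mult_right_eq)
  also have "\<dots> = t" using assms by simp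
  finally show ?thesis .
qed

lemma bracket_eq:
  assumes "0 < M" "- M < 2 * D" "2 * D \<le> M"
  shows "bracket (real_of_int (n * M - D) / real_of_int M) = n"
proof -
  have M: "real_of_int M > 0" using assms by simp
  have e: "real_of_int (n * M - D) / real_of_int M + 1/2 = real_of_int n + real_of_int (M - 2*D) / (2 * real_of_int M)"
    using M by (simp add: field_simps)
  have "0 \<le> real_of_int (M - 2*D) / (2 * real_of_int M)" using assms M by simp
  moreover have "real_of_int (M - 2*D) / (2 * real_of_int M) < 1" using assms M
    by (simp add: divide_less_eq)
  ultimately show ?thesis unfolding bracket_def e by (simp add: floor_eq_iff)
qed

lemma rle: "(0::int) < m \<Longrightarrow> (real_of_int c / 2 \<le> real_of_int b / real_of_int m) = (c * m \<le> 2 * b)"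
proof -
  assume m: "0 < m"
  have "(real_of_int c / 2 \<le> real_of_int b / real_of_int m) = (real_of_int c * real_of_int m \<le> 2 * real_of_int b)"
    using m by (simp add: field_simps)
  also have "\<dots> = (c * m \<le> 2 * b)" by (metis of_int_le_iff of_int_mult of_int_numeral)
  finally show ?thesis .
qed

lemma rlt: "(0::int) < m \<Longrightarrow> (real_of_int b / real_of_int m < real_of_int c / 2) = (2 * b < c * m)"
proof -
  assume m: "0 < m"
  have "(real_of_int b / real_of_int m < real_of_int c / 2) = (2 * real_of_int b < real_of_int c * real_of_int m)"
    using m by (simp add: field_simps)
  also have "\<dots> = (2 * b < c * m)" by (metis of_int_less_iff of_int_mult of_int_numeral)
  finally show ?thesis .
qed



lemma S2_one: "S2 G1 G2 1 = {0, G2 mod G1}"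
proof -
  have "\<And>t::int. 0 \<le> t \<and> t \<le> 1 \<longleftrightarrow> t = 0 \<or> t = 1" by auto
  then show ?thesis unfolding S2_def by (auto intro: exI[of _ 0] exI[of _ 1])
qed

lemma S1_one: "S1 G1 G2 1 = {0, G1 mod G2}"
proof -
  have "\<And>t::int. 0 \<le> t \<and> t \<le> 1 \<longleftrightarrow> t = 0 \<or> t = 1" by auto
  then show ?thesis unfolding S1_def by (auto intro: exI[of _ 0] exI[of _ 1])
qed

lemma nn2_props:
  assumes "1 < G1" "0 < G2 mod G1" "sigma G1 G2 j \<le> G2 mod G1"
  shows "1 \<le> nn2 G1 G2 j \<and> nn2 G1 G2 j < G1 \<and> sigma G1 G2 j \<le> mindist (S2 G1 G2 (nn2 G1 G2 j))"
proof -
  let ?T = "{n. 1 \<le> n \<and> n < G1 \<and> mindist (S2 G1 G2 n) \<ge> sigma G1 G2 j}"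
  have f: "finite ?T" by (rule finite_subset[of _ "{1..<G1}"]) auto
  have "1 \<in> ?T" using assms by (simp add: S2_one mindist_two)
  then have "nn2 G1 G2 j \<in> ?T" unfolding nn2_def using f by (intro Max_in) auto
  then show ?thesis by simp
qed

lemma nn1_props:
  assumes "1 < G1" "G1 < G2" "sigma G1 G2 j \<le> G1"
  shows "1 \<le> nn1 G1 G2 j \<and> nn1 G1 G2 j < G2 \<and> sigma G1 G2 j \<le> mindist (S1 G1 G2 (nn1 G1 G2 j))"
proof -
  let ?T = "{n. 1 \<le> n \<and> n < G2 \<and> mindist (S1 G1 G2 n) \<ge> sigma G1 G2 j}"
  have f: "finite ?T" by (rule finite_subset[of _ "{1..<G2}"]) auto
  have "G1 mod G2 = G1" using assms by simp
  then have "1 \<in> ?T" using assms by (simp add: S1_one mindist_two)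
  then have "nn1 G1 G2 j \<in> ?T" unfolding nn1_def using f by (intro Max_in) auto
  then show ?thesis by simp
qed

lemma S2_elem: "x \<in> S2 G1 G2 n \<Longrightarrow> \<exists>t. 0 \<le> t \<and> t \<le> n \<and> x = (t * G2) mod G1"
  unfolding S2_def by auto
lemma S1_elem: "x \<in> S1 G1 G2 n \<Longrightarrow> \<exists>t. 0 \<le> t \<and> t \<le> n \<and> x = (t * G1) mod G2"
  unfolding S1_def by auto



lemma cv1: "(0::int) < m \<Longrightarrow> (- real_of_int s / 2 \<le> real_of_int R / real_of_int m - real_of_int x) \<longleftrightarrow> (-s*m \<le> 2*(R - m*x))"
proof -
  assume m: "0 < m"
  have "(- real_of_int s / 2 \<le> real_of_int R / real_of_int m - real_of_int x) \<longleftrightarrow> (real_of_int (-s*m) \<le> real_of_int (2*(R - m*x)))"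
    using m by (simp add: field_simps)
  then show ?thesis by linarith
qed
lemma cv2: "(0::int) < m \<Longrightarrow> (real_of_int R / real_of_int m - real_of_int x < real_of_int s / 2) \<longleftrightarrow> (2*(R - m*x) < s*m)"
proof -
  assume m: "0 < m"
  have "(real_of_int R / real_of_int m - real_of_int x < real_of_int s / 2) \<longleftrightarrow> (real_of_int (2*(R - m*x)) < real_of_int (s*m))"
    using m by (simp add: field_simps)
  then show ?thesis by linarith
qed
lemma cv3: "(0::int) < m \<Longrightarrow> (- real_of_int s / 2 \<le> real_of_int R / real_of_int m + real_of_int x) \<longleftrightarrow> (-s*m \<le> 2*(R + m*x))"
proof -
  assume m: "0 < m"
  have "(- real_of_int s / 2 \<le> real_of_int R / real_of_int m + real_of_int x) \<longleftrightarrow> (real_of_int (-s*m) \<le> real_of_int (2*(R + m*x)))"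
    using m by (simp add: field_simps)
  then show ?thesis by linarith
qed
lemma cv4: "(0::int) < m \<Longrightarrow> (real_of_int R / real_of_int m + real_of_int x < real_of_int s / 2) \<longleftrightarrow> (2*(R + m*x) < s*m)"
proof -
  assume m: "0 < m"
  have "(real_of_int R / real_of_int m + real_of_int x < real_of_int s / 2) \<longleftrightarrow> (real_of_int (2*(R + m*x)) < real_of_int (s*m))"
    using m by (simp add: field_simps)
  then show ?thesis by linarith
qed
lemma cv5: "(0::int) < m \<Longrightarrow> (real_of_int s / 2 \<le> real_of_int R / real_of_int m) \<longleftrightarrow> (s*m \<le> 2*R)"
proof -
  assume m: "0 < m"
  have "(real_of_int s / 2 \<le> real_of_int R / real_of_int m) \<longleftrightarrow> (real_of_int (s*m) \<le> real_of_int (2*R))"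
    using m by (simp add: field_simps)
  then show ?thesis by linarith
qed
lemma cv6: "(0::int) < m \<Longrightarrow> (real_of_int R / real_of_int m < - real_of_int s / 2) \<longleftrightarrow> (2*R < -s*m)"
proof -
  assume m: "0 < m"
  have "(real_of_int R / real_of_int m < - real_of_int s / 2) \<longleftrightarrow> (real_of_int (2*R) < real_of_int (-s*m))"
    using m by (simp add: field_simps)
  then show ?thesis by linarith
qed
lemma cv7: "(0::int) < m \<Longrightarrow> (- real_of_int s / 2 \<le> real_of_int R / real_of_int m) \<longleftrightarrow> (-s*m \<le> 2*R)"
proof -
  assume m: "0 < m"
  have "(- real_of_int s / 2 \<le> real_of_int R / real_of_int m) \<longleftrightarrow> (real_of_int (-s*m) \<le> real_of_int (2*R))"
    using m by (simp add: field_simps)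
  then show ?thesis by linarith
qed
lemma cv8: "(0::int) < m \<Longrightarrow> (real_of_int R / real_of_int m < real_of_int s / 2) \<longleftrightarrow> (2*R < s*m)"
proof -
  assume m: "0 < m"
  have "(real_of_int R / real_of_int m < real_of_int s / 2) \<longleftrightarrow> (real_of_int (2*R) < real_of_int (s*m))"
    using m by (simp add: field_simps)
  then show ?thesis by linarith
qed

lemma alg2_int:
  assumes m: "0 < m" and al: "alg2 m G1 G2 j r1t r2t out"
  defines "s \<equiv> sigma G1 G2 j" and "R \<equiv> r1t - r2t"
    and "A \<equiv> S2 G1 G2 (nn2 G1 G2 j)" and "B \<equiv> S1 G1 G2 (nn1 G1 G2 j)"
  shows "(s*m \<le> 2*R \<and> (\<exists>s2\<in>A. (if (\<exists>x\<in>A. -s*m \<le> 2*(R - m*x) \<and> 2*(R - m*x) < s*m)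
              then -s*m \<le> 2*(R - m*s2) \<and> 2*(R - m*s2) < s*m else True) \<and>
             snd out = (s2 * inv_mod G2 G1) mod G1 \<and>
             fst out = bracket (real_of_int (snd out * (m*G2) + r2t - r1t) / real_of_int (m*G1))))
    \<or> (2*R < -s*m \<and> (\<exists>s1\<in>B. (if (\<exists>y\<in>B. -s*m \<le> 2*(R + m*y) \<and> 2*(R + m*y) < s*m)
              then -s*m \<le> 2*(R + m*s1) \<and> 2*(R + m*s1) < s*m else True) \<and>
             fst out = (s1 * inv_mod G1 G2) mod G2 \<and>
             snd out = bracket (real_of_int (fst out * (m*G1) + r1t - r2t) / real_of_int (m*G2))))
    \<or> (-s*m \<le> 2*R \<and> 2*R < s*m \<and> out = (0,0))"
  using al unfolding alg2_def Let_def s_def[symmetric] R_def[symmetric] A_def[symmetric] B_def[symmetric]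
  by (simp only: cv1[OF m] cv2[OF m] cv3[OF m] cv4[OF m] cv5[OF m] cv6[OF m] cv7[OF m] cv8[OF m] of_int_diff[symmetric]) (smt (verit))



lemma alg2_exists:
  assumes "finite (S2 G1 G2 (nn2 G1 G2 j))" "S2 G1 G2 (nn2 G1 G2 j) \<noteq> {}"
    "finite (S1 G1 G2 (nn1 G1 G2 j))" "S1 G1 G2 (nn1 G1 G2 j) \<noteq> {}"
  shows "\<exists>out. alg2 m G1 G2 j r1t r2t out"
proof -
  define q where "q = real_of_int (r1t - r2t) / real_of_int m"
  define s where "s = real_of_int (sigma G1 G2 j)"
  define A where "A = S2 G1 G2 (nn2 G1 G2 j)"
  define B where "B = S1 G1 G2 (nn1 G1 G2 j)"
  have fA: "finite A" "A \<noteq> {}" "finite B" "B \<noteq> {}" using assms A_def B_def by auto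
  have exA: "\<exists>s2. s2 \<in> A \<and> (if (\<exists>x\<in>A. - s / 2 \<le> q - x \<and> q - x < s / 2)
              then - s / 2 \<le> q - s2 \<and> q - s2 < s / 2
              else (\<forall>y\<in>A. \<bar>q - s2\<bar> \<le> \<bar>q - y\<bar>))"
  proof (cases "\<exists>x\<in>A. - s / 2 \<le> q - x \<and> q - x < s / 2")
    case True then show ?thesis by auto
  next
    case False
    define M where "M = Min ((\<lambda>y. \<bar>q - real_of_int y\<bar>) ` A)"
    have "M \<in> (\<lambda>y. \<bar>q - real_of_int y\<bar>) ` A" unfolding M_def using fA by (intro Min_in) auto
    then obtain s2 where s2: "s2 \<in> A" "M = \<bar>q - real_of_int s2\<bar>" by auto
    have "\<forall>y\<in>A. \<bar>q - s2\<bar> \<le> \<bar>q - y\<bar>"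
    proof
      fix y assume y: "y \<in> A"
      have "M \<le> \<bar>q - real_of_int y\<bar>" unfolding M_def using fA y by (intro Min_le) auto
      then show "\<bar>q - s2\<bar> \<le> \<bar>q - y\<bar>" using s2 by simp
    qed
    then show ?thesis using False s2 by auto
  qed
  have exB: "\<exists>s1. s1 \<in> B \<and> (if (\<exists>y\<in>B. - s / 2 \<le> q + y \<and> q + y < s / 2)
              then - s / 2 \<le> q + s1 \<and> q + s1 < s / 2
              else (\<forall>y\<in>B. \<bar>- q - s1\<bar> \<le> \<bar>- q - y\<bar>))"
  proof (cases "\<exists>y\<in>B. - s / 2 \<le> q + y \<and> q + y < s / 2")
    case True then show ?thesis by auto
  next
    case False
    define M where "M = Min ((\<lambda>y. \<bar>- q - real_of_int y\<bar>) ` B)"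
    have "M \<in> (\<lambda>y. \<bar>- q - real_of_int y\<bar>) ` B" unfolding M_def using fA by (intro Min_in) auto
    then obtain s1 where s1: "s1 \<in> B" "M = \<bar>- q - real_of_int s1\<bar>" by auto
    have "\<forall>y\<in>B. \<bar>- q - s1\<bar> \<le> \<bar>- q - y\<bar>"
    proof
      fix y assume y: "y \<in> B"
      have "M \<le> \<bar>- q - real_of_int y\<bar>" unfolding M_def using fA y by (intro Min_le) auto
      then show "\<bar>- q - s1\<bar> \<le> \<bar>- q - y\<bar>" using s1 by simp
    qed
    then show ?thesis using False s1 by auto
  qed
  obtain s2 where s2: "s2 \<in> A \<and> (if (\<exists>x\<in>A. - s / 2 \<le> q - x \<and> q - x < s / 2)
              then - s / 2 \<le> q - s2 \<and> q - s2 < s / 2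
              else (\<forall>y\<in>A. \<bar>q - s2\<bar> \<le> \<bar>q - y\<bar>))" using exA by blast
  obtain s1 where s1: "s1 \<in> B \<and> (if (\<exists>y\<in>B. - s / 2 \<le> q + y \<and> q + y < s / 2)
              then - s / 2 \<le> q + s1 \<and> q + s1 < s / 2
              else (\<forall>y\<in>B. \<bar>- q - s1\<bar> \<le> \<bar>- q - y\<bar>))" using exB by blast
  define o1 where "o1 = (bracket (real_of_int ((s2 * inv_mod G2 G1) mod G1 * (m*G2) + r2t - r1t) / real_of_int (m*G1)), (s2 * inv_mod G2 G1) mod G1)"
  define o2 where "o2 = ((s1 * inv_mod G1 G2) mod G2, bracket (real_of_int ((s1 * inv_mod G1 G2) mod G2 * (m*G1) + r1t - r2t) / real_of_int (m*G2)))"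
  show ?thesis
  proof (cases "q \<ge> s/2")
    case True
    then have "alg2 m G1 G2 j r1t r2t o1" unfolding alg2_def Let_def
      q_def[symmetric] s_def[symmetric] A_def[symmetric] B_def[symmetric]
      unfolding o1_def
      apply (intro disjI1 conjI exI[of _ s2])
      using True s2 by (simp_all only: fst_conv snd_conv, blast+)
    then show ?thesis by blast
  next
    case F: False
    show ?thesis
    proof (cases "q < - s/2")
      case True
      have "alg2 m G1 G2 j r1t r2t o2" unfolding alg2_def Let_def
        q_def[symmetric] s_def[symmetric] A_def[symmetric] B_def[symmetric]
        unfolding o2_def
        apply (rule disjI2, rule disjI1, intro conjI exI[of _ s1])
        using True s1 by (simp_all only: fst_conv snd_conv, blast+)
      then show ?thesis by blast
    next
      case False
      then have "alg2 m G1 G2 j r1t r2t (0,0)" unfolding alg2_def Let_def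
        q_def[symmetric] s_def[symmetric] A_def[symmetric] B_def[symmetric]
        using F by auto
      then show ?thesis by blast
    qed
  qed
qed



theorem theorem2:
  fixes m G1 G2 :: int and j K :: nat
  assumes "m \<ge> 1" and "coprime G1 G2" and "1 < G1" and "G1 < G2"
    and "sigma G1 G2 K > 1" and "sigma G1 G2 (K + 1) = 1"
    and "1 \<le> j" and "j \<le> K + 1"
  shows "(\<forall>N r1t r2t. 0 \<le> N \<and> N < bigX m G1 G2 j \<and> admissible m G1 G2 j N r1t r2t \<longrightarrow>
            (\<forall>out. alg2 m G1 G2 j r1t r2t out \<longrightarrow>
                 out = (N div (m * G1), N div (m * G2))))
       \<and> (\<exists>r1t r2t. admissible m G1 G2 j (bigX m G1 G2 j) r1t r2t
            \<and> (\<exists>out. alg2 m G1 G2 j r1t r2t out)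
            \<and> (\<forall>out. alg2 m G1 G2 j r1t r2t out \<longrightarrow>
                 out \<noteq> (bigX m G1 G2 j div (m * G1), bigX m G1 G2 j div (m * G2))))"
proof -
  have m: "0 < m" using assms by simp
  have g1: "0 < G1" "0 < G2" using assms by auto
  define s where "s = sigma G1 G2 j"
  have e2: "euc G1 G2 2 = G2 mod G1" by (simp add: numeral_2_eq_2)
  have sle: "s \<le> G2 mod G1" unfolding s_def sigma_def
    using euc_le2[OF assms(5,6) g1, of "Suc j"] assms(7,8) e2 by simp
  have spos: "0 < s" unfolding s_def sigma_def using euc_pos[OF assms(5,6) g1, of "Suc j"] assms(8) by simp
  have r2pos: "0 < G2 mod G1" using euc_pos[OF assms(5,6) g1, of 2] e2 by simp
  have r2lt: "G2 mod G1 < G1" using g1 by simp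
  have sG1: "s < G1" using sle r2lt by simp
  define a where "a = nn2 G1 G2 j"
  define b where "b = nn1 G1 G2 j"
  define A where "A = S2 G1 G2 a"
  define B where "B = S1 G1 G2 b"
  have pa: "1 \<le> a" "a < G1" "s \<le> mindist A"
    using nn2_props[OF assms(3) r2pos sle[unfolded s_def]] unfolding a_def A_def s_def by auto
  have pb: "1 \<le> b" "b < G2" "s \<le> mindist B"
    using nn1_props[OF assms(3,4), of j] sG1 unfolding b_def B_def s_def by auto
  have fA: "finite A" "finite B" unfolding A_def B_def using S2_finite S1_finite g1 by auto
  have z: "0 \<in> A" "0 \<in> B" unfolding A_def B_def using S2_mem[of 0 a G2 G1] S1_mem[of 0 b G1 G2] pa pb by auto
  have sepA: "\<And>x y. x \<in> A \<Longrightarrow> y \<in> A \<Longrightarrow> x \<noteq> y \<Longrightarrow> s \<le> \<bar>x - y\<bar>"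
    using mindist_le fA pa(3) by fastforce
  have sepB: "\<And>x y. x \<in> B \<Longrightarrow> y \<in> B \<Longrightarrow> x \<noteq> y \<Longrightarrow> s \<le> \<bar>x - y\<bar>"
    using mindist_le fA pb(3) by fastforce
  have cop21: "coprime G2 G1" using assms(2) by (simp add: coprime_commute)
  have X: "bigX m G1 G2 j = min (m * G2 * (1 + a)) (m * G1 * (1 + b))"
    unfolding bigX_def a_def b_def by simp

  have sm_pos: "0 < s * m" using spos m by simp
  have smG1: "s * m < m * G1" using sG1 m by (simp add: mult.commute)
  have smG2: "s * m < m * G2" using sG1 assms(4) m by (simp add: mult.commute)
  have partA: "\<forall>N r1t r2t. 0 \<le> N \<and> N < bigX m G1 G2 j \<and> admissible m G1 G2 j N r1t r2t \<longrightarrow>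
            (\<forall>out. alg2 m G1 G2 j r1t r2t out \<longrightarrow>
                 out = (N div (m * G1), N div (m * G2)))"
  proof (intro allI impI)
    fix N r1t r2t out
    assume H: "0 \<le> N \<and> N < bigX m G1 G2 j \<and> admissible m G1 G2 j N r1t r2t"
      and al: "alg2 m G1 G2 j r1t r2t out"
    define n1 where "n1 = N div (m*G1)"
    define n2 where "n2 = N div (m*G2)"
    define r1 where "r1 = N mod (m*G1)"
    define r2 where "r2 = N mod (m*G2)"
    define k where "k = n2*G2 - n1*G1"
    define D where "D = (r1t - r1) - (r2t - r2)"
    define R where "R = r1t - r2t"
    have mG: "0 < m*G1" "0 < m*G2" using m g1 by auto
    have N1: "N = n1*(m*G1) + r1" unfolding n1_def r1_def by (metis div_mult_mod_eq)
    have N2: "N = n2*(m*G2) + r2" unfolding n2_def r2_def by (metis div_mult_mod_eq)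
    have rb: "0 \<le> r1" "r1 < m*G1" "0 \<le> r2" "r2 < m*G2" unfolding r1_def r2_def using mG by auto
    have nn: "0 \<le> n1" "0 \<le> n2" unfolding n1_def n2_def using mG H by (auto simp: pos_imp_zdiv_nonneg_iff)
    have "n2*(m*G2) < (1+a)*(m*G2)" using N2 rb H X by (simp add: algebra_simps)
    then have n2a: "n2 \<le> a" using mG by (simp add: mult_less_cancel_right)
    have "n1*(m*G1) < (1+b)*(m*G1)" using N1 rb H X by (simp add: algebra_simps)
    then have n1b: "n1 \<le> b" using mG by (simp add: mult_less_cancel_right)
    have "m*k = n2*(m*G2) - n1*(m*G1)" unfolding k_def by (simp add: algebra_simps)
    then have Rk: "r1 - r2 = m*k" using N1 N2 by linarith
    have RD: "R = m*k + D" unfolding R_def D_def using Rk by linarith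
    have "- real_of_int s / 2 \<le> real_of_int D / real_of_int m \<and> real_of_int D / real_of_int m < real_of_int s / 2"
      using H unfolding admissible_def Let_def D_def r1_def r2_def s_def by simp
    then have Db: "-s*m \<le> 2*D" "2*D < s*m" using cv7[OF m] cv8[OF m] by blast+
    have "m*k < m*G1" using Rk rb by linarith
    then have kG1: "k < G1" using m by simp
    have "m*(-k) < m*G2" using Rk rb by simp
    then have kG2: "-k < G2" using m by (simp only: mult_less_cancel_left_pos)
    have kmA: "(n2*G2) mod G1 = k" if "0 \<le> k"
    proof -
      have "(n2*G2) mod G1 = (k + n1*G1) mod G1" unfolding k_def by simp
      also have "\<dots> = k" using that kG1 by simp
      finally show ?thesis .
    qed
    have kA: "k \<in> A" if "0 \<le> k"
      unfolding A_def using S2_mem[of n2 a G2 G1] nn n2a kmA[OF that] by metis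
    have kmB: "(n1*G1) mod G2 = -k" if "k \<le> 0"
    proof -
      have "(n1*G1) mod G2 = (-k + n2*G2) mod G2" unfolding k_def by simp
      also have "\<dots> = -k" using that kG2 by (subst mod_mult_self1) simp
      finally show ?thesis .
    qed
    have kB: "-k \<in> B" if "k \<le> 0"
      unfolding B_def using S1_mem[of n1 b G1 G2] nn n1b kmB[OF that] by metis
    have n2G1: "n2 < G1" using n2a pa by simp
    have n1G2: "n1 < G2" using n1b pb by simp
    note C3 = alg2_int[OF m al, folded s_def R_def a_def b_def, folded A_def B_def]
    show "out = (N div (m * G1), N div (m * G2))"
      unfolding n1_def[symmetric] n2_def[symmetric]
    proof -
      { assume c: "s*m \<le> 2*R \<and> (\<exists>s2\<in>A. (if (\<exists>x\<in>A. -s*m \<le> 2*(R - m*x) \<and> 2*(R - m*x) < s*m)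
              then -s*m \<le> 2*(R - m*s2) \<and> 2*(R - m*s2) < s*m else True) \<and>
             snd out = (s2 * inv_mod G2 G1) mod G1 \<and>
             fst out = bracket (real_of_int (snd out * (m*G2) + r2t - r1t) / real_of_int (m*G1)))"
        have "0 < m*k" using c RD Db by linarith
        then have kp: "0 < k" using m by (simp add: zero_less_mult_iff)
        have ex: "\<exists>x\<in>A. -s*m \<le> 2*(R - m*x) \<and> 2*(R - m*x) < s*m"
          using kA kp RD Db by (intro bexI[of _ k]) auto
        obtain s2 where s2: "s2 \<in> A" "-s*m \<le> 2*(R - m*s2)" "2*(R - m*s2) < s*m"
          "snd out = (s2 * inv_mod G2 G1) mod G1"
          "fst out = bracket (real_of_int (snd out * (m*G2) + r2t - r1t) / real_of_int (m*G1))"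
          using c ex by auto
        have "m*(k - s2) < m*s" "m*(s2 - k) < m*s" using s2 RD Db by (simp_all add: algebra_simps)
        then have "k - s2 < s" "s2 - k < s" using m by (simp_all only: mult_less_cancel_left_pos)
        then have "s2 = k" using sepA[OF s2(1) kA] kp by fastforce
        then have sn: "snd out = n2" using s2(4) inv_mod_apply[OF cop21 assms(3) nn(2) n2G1]
          using kmA[of] kp by simp
        have "snd out * (m*G2) + r2t - r1t = n1 * (m*G1) - D" using N1 N2 unfolding sn D_def by linarith
        then have "fst out = n1" using s2(5) bracket_eq[OF mG(1), of D n1] Db smG1 by simp
        then have "out = (n1, n2)" using sn by (metis prod.collapse)
      }
      moreover
      { assume c: "2*R < -s*m \<and> (\<exists>s1\<in>B. (if (\<exists>y\<in>B. -s*m \<le> 2*(R + m*y) \<and> 2*(R + m*y) < s*m)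
              then -s*m \<le> 2*(R + m*s1) \<and> 2*(R + m*s1) < s*m else True) \<and>
             fst out = (s1 * inv_mod G1 G2) mod G2 \<and>
             snd out = bracket (real_of_int (fst out * (m*G1) + r1t - r2t) / real_of_int (m*G2)))"
        have "m*k < 0" using c RD Db by linarith
        then have kn: "k < 0" using m by (simp add: mult_less_0_iff)
        have ex: "\<exists>y\<in>B. -s*m \<le> 2*(R + m*y) \<and> 2*(R + m*y) < s*m"
          using kB kn RD Db by (intro bexI[of _ "-k"]) auto
        obtain s1 where s1: "s1 \<in> B" "-s*m \<le> 2*(R + m*s1)" "2*(R + m*s1) < s*m"
          "fst out = (s1 * inv_mod G1 G2) mod G2"
          "snd out = bracket (real_of_int (fst out * (m*G1) + r1t - r2t) / real_of_int (m*G2))"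
          using c ex by auto
        have "m*(s1 + k) < m*s" "m*(-k - s1) < m*s" using s1 RD Db by (simp_all add: algebra_simps)
        then have "s1 + k < s" "-k - s1 < s" using m by (simp_all only: mult_less_cancel_left_pos)
        then have "s1 = -k" using sepB[OF s1(1) kB] kn by fastforce
        then have fn: "fst out = n1" using s1(4) inv_mod_apply[OF assms(2) _ nn(1) n1G2] assms(3,4)
          using kmB kn by simp
        have "fst out * (m*G1) + r1t - r2t = n2 * (m*G2) - (-D)" using N1 N2 unfolding fn D_def by linarith
        then have "snd out = n2" using s1(5) bracket_eq[OF mG(2), of "-D" n2] Db smG2 by simp
        then have "out = (n1, n2)" using fn by (metis prod.collapse)
      }
      moreover
      { assume c: "-s*m \<le> 2*R \<and> 2*R < s*m \<and> out = (0,0)"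
        have "m*k < m*s" "m*(-k) < m*s" using c RD Db by (simp_all add: algebra_simps)
        then have kb: "k < s" "-k < s" using m by (simp_all only: mult_less_cancel_left_pos)
        have k0: "k = 0"
        proof (rule ccontr)
          assume "k \<noteq> 0"
          then show False
          proof (cases "0 \<le> k")
            case True
            then show False using sepA[OF kA[OF True] z(1)] kb \<open>k \<noteq> 0\<close> by simp
          next
            case False
            then show False using sepB[OF kB z(2)] kb \<open>k \<noteq> 0\<close> by simp
          qed
        qed
        then have e: "n2*G2 = n1*G1" unfolding k_def by simp
        then have "G1 dvd n2*G2" by simp
        then have "G1 dvd n2" using assms(2) by (simp add: coprime_dvd_mult_left_iff)
        then have "n2 = 0" using n2G1 nn(2) zdvd_imp_le by fastforce
        then have "n1 = 0" using e g1 by simp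
        then have "out = (n1, n2)" using c \<open>n2 = 0\<close> by simp
      }
      ultimately show "out = (n1, n2)" using C3 by blast
    qed
  qed

  have partB: "\<exists>r1t r2t. admissible m G1 G2 j (bigX m G1 G2 j) r1t r2t
            \<and> (\<exists>out. alg2 m G1 G2 j r1t r2t out)
            \<and> (\<forall>out. alg2 m G1 G2 j r1t r2t out \<longrightarrow>
                 out \<noteq> (bigX m G1 G2 j div (m * G1), bigX m G1 G2 j div (m * G2)))"
  proof -
    define N where "N = bigX m G1 G2 j"
    define r1t where "r1t = N mod (m*G1)"
    define r2t where "r2t = N mod (m*G2)"
    define R where "R = r1t - r2t"
    have mG: "0 < m*G1" "0 < m*G2" using m g1 by auto
    have rb: "0 \<le> r1t" "r1t < m*G1" "0 \<le> r2t" "r2t < m*G2" unfolding r1t_def r2t_def using mG by auto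
    have adm: "admissible m G1 G2 j N r1t r2t"
      unfolding admissible_def Let_def using rb spos unfolding r1t_def r2t_def s_def by simp
    have ex: "\<exists>out. alg2 m G1 G2 j r1t r2t out"
      by (rule alg2_exists) (use fA z in \<open>auto simp: A_def B_def a_def b_def\<close>)
    have wrong: "out \<noteq> (N div (m * G1), N div (m * G2))" if al: "alg2 m G1 G2 j r1t r2t out" for out
    proof -
      note C3 = alg2_int[OF m al, folded s_def R_def a_def b_def, folded A_def B_def]
      show ?thesis
      proof (cases "m * G2 * (1 + a) \<le> m * G1 * (1 + b)")
        case True
        then have NX: "N = (1 + a) * (m*G2)" unfolding N_def X by (simp add: mult.commute)
        then have d: "N div (m*G2) = 1 + a" "r2t = 0" unfolding r2t_def using mG m g1 by simp_all
        have Rp: "0 \<le> R" unfolding R_def using rb d by simp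
        have "snd out \<noteq> 1 + a"
        proof -
          { assume c: "s*m \<le> 2*R \<and> (\<exists>s2\<in>A. (if (\<exists>x\<in>A. -s*m \<le> 2*(R - m*x) \<and> 2*(R - m*x) < s*m)
              then -s*m \<le> 2*(R - m*s2) \<and> 2*(R - m*s2) < s*m else True) \<and>
             snd out = (s2 * inv_mod G2 G1) mod G1 \<and>
             fst out = bracket (real_of_int (snd out * (m*G2) + r2t - r1t) / real_of_int (m*G1)))"
            then obtain s2 where "s2 \<in> A" "snd out = (s2 * inv_mod G2 G1) mod G1" by blast
            moreover obtain t where "0 \<le> t" "t \<le> a" "s2 = (t * G2) mod G1"
              using S2_elem[of s2 G1 G2 a] \<open>s2 \<in> A\<close> unfolding A_def by blast
            ultimately have "snd out = t" using inv_mod_apply[OF cop21 assms(3), of t] pa by simp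
            then have "snd out \<noteq> 1 + a" using \<open>t \<le> a\<close> by simp }
          moreover
          { assume c: "2*R < -s*m"
            then have False using Rp sm_pos by simp }
          moreover
          { assume c: "out = (0,0)"
            then have "snd out \<noteq> 1 + a" using pa by simp }
          ultimately show ?thesis using C3 by blast
        qed
        then show ?thesis using d by (metis snd_conv)
      next
        case False
        then have NX: "N = (1 + b) * (m*G1)" unfolding N_def X by (simp add: mult.commute)
        then have d: "N div (m*G1) = 1 + b" "r1t = 0" unfolding r1t_def using mG m g1 by simp_all
        have Rp: "R \<le> 0" unfolding R_def using rb d by simp
        have "fst out \<noteq> 1 + b"
        proof -
          { assume c: "2*R < -s*m \<and> (\<exists>s1\<in>B. (if (\<exists>y\<in>B. -s*m \<le> 2*(R + m*y) \<and> 2*(R + m*y) < s*m)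
              then -s*m \<le> 2*(R + m*s1) \<and> 2*(R + m*s1) < s*m else True) \<and>
             fst out = (s1 * inv_mod G1 G2) mod G2 \<and>
             snd out = bracket (real_of_int (fst out * (m*G1) + r1t - r2t) / real_of_int (m*G2)))"
            then obtain s1 where "s1 \<in> B" "fst out = (s1 * inv_mod G1 G2) mod G2" by blast
            moreover obtain t where "0 \<le> t" "t \<le> b" "s1 = (t * G1) mod G2"
              using S1_elem[of s1 G1 G2 b] \<open>s1 \<in> B\<close> unfolding B_def by blast
            moreover have "1 < G2" using assms(3,4) by simp
            ultimately have "fst out = t" using inv_mod_apply[OF assms(2), of t] pb by simp
            then have "fst out \<noteq> 1 + b" using \<open>t \<le> b\<close> by simp }
          moreover
          { assume c: "s*m \<le> 2*R"
            then have False using Rp sm_pos by simp }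
          moreover
          { assume c: "out = (0,0)"
            then have "fst out \<noteq> 1 + b" using pb by simp }
          ultimately show ?thesis using C3 by blast
        qed
        then show ?thesis using d by (metis fst_conv)
      qed
    qed
    show ?thesis unfolding N_def[symmetric] using adm ex wrong by blast
  qed
  show ?thesis using partA partB by blast
qed

end
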